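(* Let $\mathbb N$ be a strongly connected symmetric directed graph on $m$ vertices without self-arcs, with arc matrices $C_{ij}$ (each with $n$ columns) such that $\bar{\mathbb N}$ is well-configured. Let $\alpha(t)>0$, $t=0,1,2,\dots$, satisfy $\sum_t\alpha(t)=\infty$ and $\sum_t\alpha(t)^2<\infty$. For arbitrary $x_i(0)\in\mathbb R^n$, define for each agent $i$ $$x_i(t+1)=x_i(t)-\alpha(t)\sum_{j\in\mathcal N_i}\big(C_{ij}'C_{ij}+C_{ji}'C_{ji}\big)\big(x_i(t)-x_j(t)\big).$$ Then there exists $x^*\in\mathbb R^n$ such that $x_i(t)\to x^*$ as $t\to\infty$ for every $i$.
   Context: A directed graph is symmetric if whenever $(i,j)$ is an arc so is $(j,i)$. $\mathcal N_i$ is the set of neighbors $j$ of agent $i$ (those $j\ne i$ with $(j,i)$ an arc). Each arc $(j,i)$ carries a real matrix $C_{ji}$ with $n$ columns; $'$ denotes transpose. $\bar{\mathbb N}$ is well-configured if for all $x_1,\dots,x_m\in\mathbb R^n$, $C_{ji}x_i=C_{ji}x_j$ for every arc $(j,i)$ implies $x_1=\cdots=x_m$. *)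

theory Defs
  imports "HOL-Analysis.Analysis"
begin

text \<open>Agents are the elements of a finite type 'a; arcs form a relation A,
  (j,i) \<in> A meaning an arc from j to i. Arc matrices C j i :: real^'n^'k
  (n columns; the row type 'k is arbitrary).\<close>

definition symmetric_digraph :: "('a \<times> 'a) set \<Rightarrow> bool" where
  "symmetric_digraph A \<longleftrightarrow> (\<forall>i j. (i,j) \<in> A \<longrightarrow> (j,i) \<in> A)"

definition strongly_connected :: "('a \<times> 'a) set \<Rightarrow> bool" where
  "strongly_connected A \<longleftrightarrow> (\<forall>i j. (i,j) \<in> A\<^sup>*)"

definition no_self_arcs :: "('a \<times> 'a) set \<Rightarrow> bool" where
  "no_self_arcs A \<longleftrightarrow> (\<forall>i. (i,i) \<notin> A)"

definition neighbors :: "('a \<times> 'a) set \<Rightarrow> 'a \<Rightarrow> 'a set" where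
  "neighbors A i = {j. j \<noteq> i \<and> (j,i) \<in> A}"

text \<open>Well-configuredness of the graph with self-arcs added (self-arcs impose
  no constraint, so only the arcs of A matter).\<close>
definition well_configured ::
  "('a \<times> 'a) set \<Rightarrow> ('a \<Rightarrow> 'a \<Rightarrow> real^'n^'k) \<Rightarrow> bool" where
  "well_configured A C \<longleftrightarrow>
     (\<forall>x :: 'a \<Rightarrow> real^'n.
        (\<forall>j i. (j,i) \<in> A \<longrightarrow> C j i *v x i = C j i *v x j) \<longrightarrow> (\<forall>i j. x i = x j))"

end

theory Submission
  imports Defs
begin


definition MM :: "('a \<Rightarrow> 'a \<Rightarrow> real^'n^'k) \<Rightarrow> 'a \<Rightarrow> 'a \<Rightarrow> real^'n^'n" where
  "MM C i j = transpose (C i j) ** C i j + transpose (C j i) ** C j i"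

definition Lap :: "('a::finite \<times> 'a) set \<Rightarrow> ('a \<Rightarrow> 'a \<Rightarrow> real^'n^'k) \<Rightarrow> (real^'n)^'a \<Rightarrow> (real^'n)^'a" where
  "Lap A C e = (\<chi> i. \<Sum>j\<in>neighbors A i. MM C i j *v (e$i - e$j))"

definition QF :: "('a::finite \<times> 'a) set \<Rightarrow> ('a \<Rightarrow> 'a \<Rightarrow> real^'n^'k) \<Rightarrow> (real^'n)^'a \<Rightarrow> real" where
  "QF A C e = (\<Sum>i\<in>UNIV. \<Sum>j\<in>neighbors A i. (norm (C i j *v (e$i - e$j)))\<^sup>2 + (norm (C j i *v (e$i - e$j)))\<^sup>2)"

lemma MM_sym: "MM C j i = MM C i j"
  by (simp add: MM_def add.commute)

lemma MM_inner: "inner (MM C i j *v v) w = inner (C i j *v v) (C i j *v w) + inner (C j i *v v) (C j i *v w)"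
  by (simp add: MM_def matrix_vector_mult_add_rdistrib inner_add_left dot_lmul_matrix
      flip: matrix_vector_mul_assoc)

lemma nb_sym: "symmetric_digraph A \<Longrightarrow> j \<in> neighbors A i \<longleftrightarrow> i \<in> neighbors A j"
  unfolding symmetric_digraph_def neighbors_def by auto

lemma sum_nb_swap:
  fixes g :: "'a::finite \<Rightarrow> 'a \<Rightarrow> 'b::comm_monoid_add"
  assumes "symmetric_digraph A"
  shows "(\<Sum>i\<in>UNIV. \<Sum>j\<in>neighbors A i. g i j) = (\<Sum>i\<in>UNIV. \<Sum>j\<in>neighbors A i. g j i)"
proof -
  have e: "\<And>h i. (\<Sum>j\<in>neighbors A i. h j) = (\<Sum>j\<in>UNIV. if j \<in> neighbors A i then h j else 0)"
    by (simp add: sum.If_cases)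
  have "(\<Sum>i\<in>UNIV. \<Sum>j\<in>neighbors A i. g i j) = (\<Sum>i\<in>UNIV. \<Sum>j\<in>UNIV. if j \<in> neighbors A i then g i j else 0)"
    by (rule sum.cong[OF refl]) (rule e)
  also have "\<dots> = (\<Sum>j\<in>UNIV. \<Sum>i\<in>UNIV. if j \<in> neighbors A i then g i j else 0)"
    by (rule sum.swap)
  also have "\<dots> = (\<Sum>j\<in>UNIV. \<Sum>i\<in>UNIV. if i \<in> neighbors A j then g i j else 0)"
    using nb_sym[OF assms] by simp
  also have "\<dots> = (\<Sum>i\<in>UNIV. \<Sum>j\<in>neighbors A i. g j i)"
    by (rule sum.cong[OF refl]) (rule e[symmetric])
  finally show ?thesis .
qed

lemma Lap_linear: "linear (Lap A C)"
proof (rule linearI)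
  fix x y show "Lap A C (x+y) = Lap A C x + Lap A C y" unfolding Lap_def
    by (subst vec_eq_iff, intro allI) (simp add: sum.distrib[symmetric] algebra_simps)
next
  fix c :: real and x show "Lap A C (c *\<^sub>R x) = c *\<^sub>R Lap A C x" unfolding Lap_def
    by (subst vec_eq_iff, intro allI) (simp add: scaleR_sum_right algebra_simps)
qed

lemma sum_Lap:
  assumes "symmetric_digraph A"
  shows "(\<Sum>i\<in>UNIV. Lap A C e $ i) = 0"
proof -
  let ?S = "\<Sum>i\<in>UNIV. \<Sum>j\<in>neighbors A i. MM C i j *v (e$i - e$j)"
  have "?S = (\<Sum>i\<in>UNIV. \<Sum>j\<in>neighbors A i. MM C j i *v (e$j - e$i))"
    by (rule sum_nb_swap[OF assms])
  also have "\<dots> = - ?S"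
    by (simp add: MM_sym algebra_simps flip: sum_negf)
  finally have eq: "?S = - ?S" .
  have "?S + ?S = ?S + (- ?S)" using eq by (rule arg_cong[where f="\<lambda>z. ?S + z"])
  then have "(2::real) *\<^sub>R ?S = 0" by (simp only: scaleR_2) simp
  then have "?S = 0" by simp
  then show ?thesis by (simp add: Lap_def)
qed

lemma inner_Lap:
  assumes "symmetric_digraph A"
  shows "2 * inner e (Lap A C e) = QF A C e"
proof -
  let ?S = "\<Sum>i\<in>UNIV. \<Sum>j\<in>neighbors A i. inner (e$i) (MM C i j *v (e$i - e$j))"
  have 1: "inner e (Lap A C e) = ?S"
    unfolding inner_vec_def[of e "Lap A C e"] by (simp add: Lap_def inner_sum_right)
  have "?S = (\<Sum>i\<in>UNIV. \<Sum>j\<in>neighbors A i. inner (e$j) (MM C j i *v (e$j - e$i)))"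
    by (rule sum_nb_swap[OF assms])
  also have "\<dots> = (\<Sum>i\<in>UNIV. \<Sum>j\<in>neighbors A i. - inner (e$j) (MM C i j *v (e$i - e$j)))"
    by (simp add: MM_sym algebra_simps)
  finally have 2: "?S = (\<Sum>i\<in>UNIV. \<Sum>j\<in>neighbors A i. - inner (e$j) (MM C i j *v (e$i - e$j)))" .
  have "2 * ?S = ?S + (\<Sum>i\<in>UNIV. \<Sum>j\<in>neighbors A i. - inner (e$j) (MM C i j *v (e$i - e$j)))"
    using 2 by simp
  also have "\<dots> = (\<Sum>i\<in>UNIV. \<Sum>j\<in>neighbors A i. inner (e$i - e$j) (MM C i j *v (e$i - e$j)))"
    by (simp add: sum.distrib[symmetric] inner_diff_left)
  also have "\<dots> = (\<Sum>i\<in>UNIV. \<Sum>j\<in>neighbors A i. inner (MM C i j *v (e$i - e$j)) (e$i - e$j))"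
    by (simp only: inner_commute)
  also have "\<dots> = QF A C e"
    by (simp add: QF_def MM_inner power2_norm_eq_inner)
  finally show ?thesis using 1 by simp
qed

lemma QF_nonneg: "0 \<le> QF A C e"
  unfolding QF_def by (rule sum_nonneg)+ simp

lemma QF_zero:
  assumes "well_configured A C" "QF A C e = 0"
  shows "e$i = e$j"
proof -
  have "\<forall>i. \<forall>j\<in>neighbors A i. (norm (C i j *v (e$i - e$j)))\<^sup>2 + (norm (C j i *v (e$i - e$j)))\<^sup>2 = 0"
  proof (intro allI ballI)
    fix i j assume j: "j \<in> neighbors A i"
    have "\<forall>i\<in>UNIV. (\<Sum>j\<in>neighbors A i. (norm (C i j *v (e$i - e$j)))\<^sup>2 + (norm (C j i *v (e$i - e$j)))\<^sup>2) = 0"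
      using assms(2) unfolding QF_def
      by (subst (asm) sum_nonneg_eq_0_iff) (auto intro: sum_nonneg)
    then have "(\<Sum>j\<in>neighbors A i. (norm (C i j *v (e$i - e$j)))\<^sup>2 + (norm (C j i *v (e$i - e$j)))\<^sup>2) = 0"
      by simp
    then show "(norm (C i j *v (e$i - e$j)))\<^sup>2 + (norm (C j i *v (e$i - e$j)))\<^sup>2 = 0"
      using j by (subst (asm) sum_nonneg_eq_0_iff) auto
  qed
  then have h: "\<And>i j. j \<in> neighbors A i \<Longrightarrow> C j i *v e$i = C j i *v e$j"
    by (auto simp: add_nonneg_eq_0_iff algebra_simps)
  have "\<forall>j i. (j,i) \<in> A \<longrightarrow> C j i *v e$i = C j i *v e$j"
  proof (intro allI impI)
    fix j i assume "(j,i) \<in> A"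
    show "C j i *v e$i = C j i *v e$j"
    proof (cases "j = i")
      case False then show ?thesis using h[of j i] \<open>(j,i) \<in> A\<close> by (simp add: neighbors_def)
    qed simp
  qed
  then show ?thesis using assms(1) unfolding well_configured_def
    by (metis (no_types, lifting))
qed


lemma sum_scale_vec: "(\<Sum>i\<in>UNIV. (c *\<^sub>R (e::(real^'n)^'a::finite)) $ i) = c *\<^sub>R (\<Sum>i\<in>UNIV. e $ i)"
  by (simp add: scaleR_sum_right)

lemma coercive:
  fixes A :: "('a::finite \<times> 'a) set" and C :: "'a \<Rightarrow> 'a \<Rightarrow> real^'n^'k"
  assumes sym: "symmetric_digraph A" and wc: "well_configured A C"
  shows "\<exists>\<mu>>0. \<forall>e::(real^'n)^'a. (\<Sum>i\<in>UNIV. e$i) = 0 \<longrightarrow> \<mu> * (norm e)\<^sup>2 \<le> inner e (Lap A C e)"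
proof -
  define S where "S = {e::(real^'n)^'a. (\<Sum>i\<in>UNIV. e$i) = 0 \<and> norm e = 1}"
  define f where "f = (\<lambda>e::(real^'n)^'a. inner e (Lap A C e))"
  have bl: "bounded_linear (Lap A C)"
    using Lap_linear linear_conv_bounded_linear by blast
  have pos: "f e > 0" if "e \<in> S" for e
  proof -
    have "f e \<ge> 0" using inner_Lap[OF sym, where e=e and C=C] QF_nonneg[of A C e] by (simp add: f_def)
    moreover have "f e \<noteq> 0"
    proof
      assume "f e = 0"
      then have "QF A C e = 0" using inner_Lap[OF sym, where e=e and C=C] by (simp add: f_def)
      then have eq: "\<And>i j. e$i = e$j" using QF_zero[OF wc] by blast
      obtain k :: 'a where True by blast
      have "(\<Sum>i\<in>UNIV. e$i) = (\<Sum>i::'a\<in>UNIV. e$k)" using eq by (intro sum.cong) auto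
      also have "\<dots> = of_nat CARD('a) *\<^sub>R e$k" by (rule sum_constant_scaleR)
      finally have "e$k = 0" using that by (simp add: S_def)
      then have "e = 0" using eq by (metis vec_eq_iff zero_index)
      then show False using that by (simp add: S_def)
    qed
    ultimately show ?thesis by simp
  qed
  have "\<exists>\<mu>>0. \<forall>e\<in>S. \<mu> \<le> f e"
  proof (cases "S = {}")
    case True then show ?thesis by (intro exI[of _ 1]) auto
  next
    case False
    have cont: "continuous_on UNIV f" unfolding f_def
      by (intro continuous_intros linear_continuous_on bl)
    have "closed S" unfolding S_def Collect_conj_eq
      by (intro closed_Int closed_Collect_eq continuous_intros)
    moreover have "bounded S" unfolding S_def bounded_iff by auto
    ultimately have "compact S" by (simp add: compact_eq_bounded_closed)
    then obtain e0 where "e0 \<in> S" "\<forall>y\<in>S. f e0 \<le> f y"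
      using continuous_attains_inf[OF _ False continuous_on_subset[OF cont]] by blast
    then show ?thesis using pos by blast
  qed
  then obtain \<mu> where mu: "\<mu> > 0" "\<forall>e\<in>S. \<mu> \<le> f e" by blast
  have "(\<Sum>i\<in>UNIV. e$i) = 0 \<longrightarrow> \<mu> * (norm e)\<^sup>2 \<le> inner e (Lap A C e)" for e
  proof
    assume s0: "(\<Sum>i\<in>UNIV. e$i) = 0"
    show "\<mu> * (norm e)\<^sup>2 \<le> inner e (Lap A C e)"
    proof (cases "e = 0")
      case True then show ?thesis by (simp add: linear_0[OF Lap_linear])
    next
      case False
      let ?u = "(1 / norm e) *\<^sub>R e"
      have "?u \<in> S" using False s0 by (simp add: S_def flip: scaleR_sum_right)
      then have "\<mu> \<le> f ?u" using mu by blast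
      also have "f ?u = inner e (Lap A C e) / (norm e)\<^sup>2"
        by (simp add: f_def linear_cmul[OF Lap_linear] power2_eq_square)
      finally show ?thesis using False by (simp add: pos_le_divide_eq)
    qed
  qed
  then show ?thesis using mu(1) by blast
qed


theorem theorem4:
  fixes A :: "('a::finite \<times> 'a) set"
    and C :: "'a \<Rightarrow> 'a \<Rightarrow> real^'n^'k"
    and \<alpha> :: "nat \<Rightarrow> real"
    and x :: "nat \<Rightarrow> 'a \<Rightarrow> real^'n"
  assumes "symmetric_digraph A" and "strongly_connected A" and "no_self_arcs A"
    and "well_configured A C"
    and "\<forall>t. \<alpha> t > 0"
    and "\<not> summable \<alpha>"
    and "summable (\<lambda>t. (\<alpha> t)\<^sup>2)"
    and "\<forall>t i. x (Suc t) i = x t i - \<alpha> t *\<^sub>R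
           (\<Sum>j\<in>neighbors A i.
              (transpose (C i j) ** C i j + transpose (C j i) ** C j i) *v (x t i - x t j))"
  shows "\<exists>xs :: real^'n. \<forall>i. (\<lambda>t. x t i) \<longlonglongrightarrow> xs"
proof -
  note sym = assms(1) and wc = assms(4)
  have apos: "\<And>t. \<alpha> t > 0" using assms(5) by blast
  have step0: "\<And>t i. x (Suc t) i = x t i - \<alpha> t *\<^sub>R
           (\<Sum>j\<in>neighbors A i.
              (transpose (C i j) ** C i j + transpose (C j i) ** C j i) *v (x t i - x t j))"
    using assms(8) by blast
  define L where "L = Lap A C"
  define X where "X t = (\<chi> i. x t i)" for t
  have Xstep: "X (Suc t) = X t - \<alpha> t *\<^sub>R L (X t)" for t
    unfolding X_def L_def Lap_def MM_def by (subst vec_eq_iff, intro allI) (simp add: step0)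
  define s where "s = (\<Sum>i\<in>UNIV. x 0 i)"
  have sumX: "(\<Sum>i\<in>UNIV. X t $ i) = s" for t
  proof (induction t)
    case 0 then show ?case by (simp add: X_def s_def)
  next
    case (Suc t)
    have "(\<Sum>i\<in>UNIV. X (Suc t) $ i) = (\<Sum>i\<in>UNIV. X t $ i) - \<alpha> t *\<^sub>R (\<Sum>i\<in>UNIV. L (X t) $ i)"
      by (simp add: Xstep sum_subtractf scaleR_sum_right)
    also have "(\<Sum>i\<in>UNIV. L (X t) $ i) = 0" unfolding L_def by (rule sum_Lap[OF sym])
    finally show ?case using Suc by simp
  qed
  define c where "c = (1 / real CARD('a)) *\<^sub>R s"
  define E where "E t = X t - (\<chi> i. c)" for t
  have sumE: "(\<Sum>i\<in>UNIV. E t $ i) = 0" for t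
  proof -
    have "(\<Sum>i\<in>UNIV. E t $ i) = s - (\<Sum>i::'a\<in>UNIV. c)"
      by (simp add: E_def sum_subtractf sumX)
    also have "(\<Sum>i::'a\<in>UNIV. c) = real CARD('a) *\<^sub>R c" by (rule sum_constant_scaleR)
    also have "\<dots> = s" by (simp add: c_def)
    finally show ?thesis by simp
  qed
  have LapE: "L (E t) = L (X t)" for t
    unfolding E_def L_def Lap_def by simp
  have Estep: "E (Suc t) = E t - \<alpha> t *\<^sub>R L (E t)" for t
    using Xstep[of t] LapE[of t] by (simp add: E_def)
  obtain \<mu> where mu: "\<mu> > 0" "\<And>e. (\<Sum>i\<in>UNIV. e$i) = 0 \<Longrightarrow> \<mu> * (norm e)\<^sup>2 \<le> inner e (L e)"
    using coercive[OF sym wc] unfolding L_def by blast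
  have bl: "bounded_linear L"
    unfolding L_def using Lap_linear linear_conv_bounded_linear by blast
  obtain K where K: "K > 0" "\<And>e. norm (L e) \<le> norm e * K"
    using bounded_linear.pos_bounded[OF bl] by blast
  define V where "V t = (norm (E t))\<^sup>2" for t
  have Vnn: "V t \<ge> 0" for t by (simp add: V_def)
  have Vrec: "V (Suc t) \<le> (1 - 2 * \<alpha> t * \<mu> + (\<alpha> t)\<^sup>2 * K\<^sup>2) * V t" for t
  proof -
    have "V (Suc t) = V t - 2 * \<alpha> t * inner (E t) (L (E t)) + (\<alpha> t)\<^sup>2 * (norm (L (E t)))\<^sup>2"
      unfolding V_def Estep power2_norm_eq_inner
      by (simp add: inner_diff_left inner_diff_right inner_commute algebra_simps power2_eq_square)
    moreover have "\<mu> * V t \<le> inner (E t) (L (E t))" using mu(2)[OF sumE] by (simp add: V_def)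
    moreover have "(norm (L (E t)))\<^sup>2 \<le> K\<^sup>2 * V t"
    proof -
      have "norm (L (E t)) \<le> norm (E t) * K" by (rule K(2))
      then have "(norm (L (E t)))\<^sup>2 \<le> (norm (E t) * K)\<^sup>2" by (rule power_mono) simp
      then show ?thesis by (simp add: V_def power_mult_distrib mult.commute)
    qed
    ultimately have eq: "V (Suc t) = V t - 2 * \<alpha> t * inner (E t) (L (E t)) + (\<alpha> t)\<^sup>2 * (norm (L (E t)))\<^sup>2"
      and a: "\<mu> * V t \<le> inner (E t) (L (E t))" and b: "(norm (L (E t)))\<^sup>2 \<le> K\<^sup>2 * V t" by auto
    have a2: "(2 * \<alpha> t) * (\<mu> * V t) \<le> (2 * \<alpha> t) * inner (E t) (L (E t))"
      using a apos[of t] by (intro mult_left_mono) auto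
    have b2: "(\<alpha> t)\<^sup>2 * (norm (L (E t)))\<^sup>2 \<le> (\<alpha> t)\<^sup>2 * (K\<^sup>2 * V t)"
      using b by (intro mult_left_mono) auto
    have "V (Suc t) \<le> V t - (2 * \<alpha> t) * (\<mu> * V t) + (\<alpha> t)\<^sup>2 * (K\<^sup>2 * V t)"
      using eq a2 b2 by linarith
    then show ?thesis by (simp add: algebra_simps)
  qed
  have a0: "(\<lambda>t. (\<alpha> t)\<^sup>2) \<longlonglongrightarrow> 0" by (rule summable_LIMSEQ_zero[OF assms(7)])
  define \<delta> where "\<delta> = min (\<mu> / K\<^sup>2) (1 / \<mu>)"
  have dpos: "\<delta> > 0" using mu(1) K(1) by (simp add: \<delta>_def)
  have "eventually (\<lambda>t. (\<alpha> t)\<^sup>2 < \<delta>\<^sup>2) sequentially"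
    using order_tendstoD(2)[OF a0] dpos by simp
  then obtain T where T0: "\<And>t. t \<ge> T \<Longrightarrow> (\<alpha> t)\<^sup>2 < \<delta>\<^sup>2" by (auto simp: eventually_sequentially)
  have T: "\<alpha> t \<le> \<delta>" if "t \<ge> T" for t
    using T0[OF that] dpos apos[of t] by (meson less_imp_le power_less_imp_less_base)
  have Vdec: "V (Suc t) \<le> (1 - \<alpha> t * \<mu>) * V t" if "t \<ge> T" for t
  proof -
    have "\<alpha> t \<le> \<mu> / K\<^sup>2" using T[OF that] by (simp add: \<delta>_def)
    then have "\<alpha> t * K\<^sup>2 \<le> \<mu>" using K(1) by (simp add: pos_le_divide_eq)
    then have "(\<alpha> t)\<^sup>2 * K\<^sup>2 \<le> \<alpha> t * \<mu>" using apos[of t]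
      by (simp add: power2_eq_square)
    then have "1 - 2 * \<alpha> t * \<mu> + (\<alpha> t)\<^sup>2 * K\<^sup>2 \<le> 1 - \<alpha> t * \<mu>" by (simp add: algebra_simps)
    then show ?thesis using Vrec[of t] Vnn[of t] by (meson mult_right_mono order_trans)
  qed
  have amu1: "\<alpha> t * \<mu> \<le> 1" if "t \<ge> T" for t
  proof -
    have "\<alpha> t \<le> 1 / \<mu>" using T[OF that] by (simp add: \<delta>_def)
    then show ?thesis using mu(1) by (simp add: pos_le_divide_eq mult.commute)
  qed
  have Vexp: "V (Suc t) \<le> exp (- (\<alpha> t * \<mu>)) * V t" if "t \<ge> T" for t
  proof -
    have "1 - \<alpha> t * \<mu> \<le> exp (- (\<alpha> t * \<mu>))" using exp_ge_add_one_self[of "- (\<alpha> t * \<mu>)"] by simp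
    then show ?thesis using Vdec[OF that] Vnn[of t] by (meson mult_right_mono order_trans)
  qed
  have Vmono: "V (Suc t) \<le> V t" if "t \<ge> T" for t
  proof -
    have "0 \<le> (\<alpha> t * \<mu>) * V t" using Vnn[of t] apos[of t] mu(1) by simp
    then show ?thesis using Vdec[OF that] by (simp add: algebra_simps)
  qed
  have Vmono2: "V n \<le> V m" if "T \<le> m" "m \<le> n" for m n
    using that(2)
  proof (induction n rule: dec_induct)
    case base then show ?case by simp
  next
    case (step n) then show ?case using Vmono[of n] that(1) by simp
  qed
  have Vprod: "V (T + k) \<le> V T * exp (- \<mu> * (\<Sum>s<k. \<alpha> (T + s)))" for k
  proof (induction k)
    case 0 then show ?case by simp
  next
    case (Suc k)
    have "V (T + Suc k) \<le> exp (- (\<alpha> (T + k) * \<mu>)) * V (T + k)"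
      using Vexp[of "T + k"] by simp
    also have "\<dots> \<le> exp (- (\<alpha> (T + k) * \<mu>)) * (V T * exp (- \<mu> * (\<Sum>s<k. \<alpha> (T + s))))"
      using Suc by (intro mult_left_mono) auto
    also have "\<dots> = V T * exp (- \<mu> * (\<Sum>s<Suc k. \<alpha> (T + s)))"
      by (simp add: algebra_simps flip: exp_add)
    finally show ?case .
  qed
  have unb: "\<exists>k. B < (\<Sum>s<k. \<alpha> (T + s))" for B
  proof (rule ccontr)
    assume "\<not> ?thesis"
    then have "\<And>k. (\<Sum>s<k. \<alpha> (s + T)) \<le> B" by (simp add: not_less add.commute)
    then have "summable (\<lambda>s. \<alpha> (s + T))"
      using apos by (intro summableI_nonneg_bounded[where x=B]) (auto intro: less_imp_le)
    then show False using assms(6) by simp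
  qed
  have V0: "V \<longlonglongrightarrow> 0"
  proof (rule LIMSEQ_I)
    fix r :: real assume r: "r > 0"
    obtain k where k: "V T / (r * \<mu>) < (\<Sum>s<k. \<alpha> (T + s))" using unb by blast
    define S where "S = (\<Sum>s<k. \<alpha> (T + s))"
    have "V T < r * \<mu> * S" using k r mu(1) by (simp add: S_def pos_divide_less_eq mult.commute)
    also have "\<dots> < r * exp (\<mu> * S)"
    proof -
      have "\<mu> * S < exp (\<mu> * S)" using exp_ge_add_one_self[of "\<mu> * S"] by linarith
      then show ?thesis using r by (simp add: mult.assoc)
    qed
    finally have "V T * exp (- \<mu> * S) < r"
      by (simp add: exp_minus field_simps)
    then have "V (T + k) < r" using Vprod[of k] by (simp add: S_def)
    have "\<forall>n\<ge>T + k. norm (V n - 0) < r"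
    proof (intro allI impI)
      fix n assume "n \<ge> T + k"
      then have "V n \<le> V (T + k)" using Vmono2[of "T + k" n] by simp
      then show "norm (V n - 0) < r" using \<open>V (T + k) < r\<close> Vnn[of n] by simp
    qed
    then show "\<exists>no. \<forall>n\<ge>no. norm (V n - 0) < r" by blast
  qed
  have "(\<lambda>t. norm (E t)) \<longlonglongrightarrow> 0"
  proof -
    have "(\<lambda>t. sqrt (V t)) \<longlonglongrightarrow> sqrt 0" by (intro tendsto_real_sqrt V0)
    then show ?thesis by (simp add: V_def)
  qed
  then have E0: "E \<longlonglongrightarrow> 0" by (rule tendsto_norm_zero_cancel)
  show ?thesis
  proof (intro exI allI)
    fix i
    have "(\<lambda>t. E t $ i + c) \<longlonglongrightarrow> 0 $ i + c"
      by (intro tendsto_add tendsto_vec_nth E0 tendsto_const)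
    moreover have "(\<lambda>t. E t $ i + c) = (\<lambda>t. x t i)" by (simp add: E_def X_def)
    ultimately show "(\<lambda>t. x t i) \<longlonglongrightarrow> c" by simp
  qed
qed

end
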